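(* For every composition $\alpha$, the coproduct of $\mathrm{QSym}$ satisfies $\Delta(S_\alpha)=\sum_{\beta\gamma=\alpha}S_\beta\otimes S_\gamma$, where the sum is over all ways of writing $\alpha$ as a concatenation $\beta\gamma$ of two (possibly empty) compositions.
   Context: A composition $\alpha=(\alpha_1,\dots,\alpha_\ell)$ of $n$ is a finite sequence of positive integers summing to $n$; the concatenation of $\beta$ and $\gamma$ is $\beta\gamma$; the empty composition $()$ has $M_{()}=S_{()}=1$. Set $\mathcal{I}(\alpha)=\{\alpha_1,\alpha_1+\alpha_2,\dots,\alpha_1+\cdots+\alpha_{\ell-1}\}$, and write $\beta\le\alpha$ if $\mathcal{I}(\beta)\subseteq\mathcal{I}(\alpha)$. $M_\alpha=\sum_{i_1<\cdots<i_\ell}x_{i_1}^{\alpha_1}\cdots x_{i_\ell}^{\alpha_\ell}$. $\mathrm{QSym}$ is the Hopf algebra spanned by the $M_\alpha$ with coproduct $\Delta(M_\alpha)=\sum_{\beta\gamma=\alpha}M_\beta\otimes M_\gamma$. Shuffle functions: for $\alpha=(\alpha_1,\dots,\alpha_\ell)$ let $\mathrm{OtE}(\alpha)=\{i:\alpha_i\text{ odd},\ \alpha_{i+1}\text{ even}\}=\{i_1<\cdots<i_k\}$ and $m_o(\alpha)=(\alpha_1+\cdots+\alpha_{i_1},\ \alpha_{i_1+1}+\cdots+\alpha_{i_2},\ \dots,\ \alpha_{i_k+1}+\cdots+\alpha_\ell)$. For $m_o(\alpha)\le\beta\le\alpha$, each part $\beta_i$ is a sum of a block of consecutive parts of $\alpha$;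 with $\mathrm{O}(i),\mathrm{E}(i)$ the numbers of odd and even parts of that block put $c_\alpha^\beta=\prod_i\frac{1}{\mathrm{O}(i)!\mathrm{E}(i)!}$. Then $S_\alpha=\sum_{m_o(\alpha)\le\beta\le\alpha}c_\alpha^\beta M_\beta$. *)

theory Defs
  imports Complex_Main "HOL-Library.Function_Algebras"
begin

text \<open>An element of QSym (over the rationals) is represented by its coefficient
  function with respect to the monomial basis M; an element of
  QSym \<otimes> QSym by its coefficient function with respect to the basis
  M_beta \<otimes> M_gamma.\<close>

definition is_comp :: "nat list \<Rightarrow> bool" where
  "is_comp \<alpha> \<longleftrightarrow> (\<forall>x\<in>set \<alpha>. 0 < x)"

type_synonym qsym = "nat list \<Rightarrow> rat"
type_synonym qsym2 = "nat list \<times> nat list \<Rightarrow> rat"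

definition M :: "nat list \<Rightarrow> qsym" where
  "M \<alpha> = (\<lambda>\<beta>. if \<beta> = \<alpha> then 1 else 0)"

definition tensor :: "qsym \<Rightarrow> qsym \<Rightarrow> qsym2" where
  "tensor f g = (\<lambda>(\<beta>, \<gamma>). f \<beta> * g \<gamma>)"

text \<open>Coproduct: the linear extension of Delta(M_alpha) = sum over beta gamma = alpha of
  M_beta \<otimes> M_gamma; the coefficient of M_beta \<otimes> M_gamma in Delta(f) is the
  coefficient of M_(beta gamma) in f.\<close>
definition Delta :: "qsym \<Rightarrow> qsym2" where
  "Delta f = (\<lambda>(\<beta>, \<gamma>). f (\<beta> @ \<gamma>))"

definition Iset :: "nat list \<Rightarrow> nat set" where
  "Iset \<alpha> = {sum_list (take k \<alpha>) | k. 0 < k \<and> k < length \<alpha>}"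

text \<open>m_o(alpha): merge consecutive parts, cutting exactly after odd-then-even positions.\<close>
fun m_o :: "nat list \<Rightarrow> nat list" where
  "m_o [] = []"
| "m_o [a] = [a]"
| "m_o (a # b # rest) =
     (if odd a \<and> even b then a # m_o (b # rest)
      else (case m_o (b # rest) of [] \<Rightarrow> [a] | h # t \<Rightarrow> (a + h) # t))"

text \<open>Numbers of odd / even parts of alpha in the block of alpha forming part i (0-indexed) of beta.\<close>
definition O_cnt :: "nat list \<Rightarrow> nat list \<Rightarrow> nat \<Rightarrow> nat" where
  "O_cnt \<alpha> \<beta> i = card {j. j < length \<alpha> \<and> odd (\<alpha> ! j) \<and>
      sum_list (take i \<beta>) < sum_list (take (Suc j) \<alpha>) \<and>
      sum_list (take (Suc j) \<alpha>) \<le> sum_list (take (Suc i) \<beta>)}"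

definition E_cnt :: "nat list \<Rightarrow> nat list \<Rightarrow> nat \<Rightarrow> nat" where
  "E_cnt \<alpha> \<beta> i = card {j. j < length \<alpha> \<and> even (\<alpha> ! j) \<and>
      sum_list (take i \<beta>) < sum_list (take (Suc j) \<alpha>) \<and>
      sum_list (take (Suc j) \<alpha>) \<le> sum_list (take (Suc i) \<beta>)}"

definition coef :: "nat list \<Rightarrow> nat list \<Rightarrow> rat" where
  "coef \<alpha> \<beta> = (\<Prod>i<length \<beta>. 1 / (fact (O_cnt \<alpha> \<beta> i) * fact (E_cnt \<alpha> \<beta> i)))"

text \<open>Shuffle function S_alpha = sum over m_o(alpha) \<le> beta \<le> alpha of c_alpha^beta M_beta,
  beta ranging over compositions of |alpha|.\<close>
definition S :: "nat list \<Rightarrow> qsym" where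
  "S \<alpha> = (\<Sum>\<beta>\<in>{\<beta>. is_comp \<beta> \<and> sum_list \<beta> = sum_list \<alpha> \<and>
                      Iset (m_o \<alpha>) \<subseteq> Iset \<beta> \<and> Iset \<beta> \<subseteq> Iset \<alpha>}.
            (\<lambda>\<delta>. coef \<alpha> \<beta> * M \<beta> \<delta>))"

end

theory Submission
  imports Defs
begin

lemma sum_fun_app: "(\<Sum>x\<in>A. f x) y = (\<Sum>x\<in>A. f x y)"
  by (induction A rule: infinite_finite_induct) auto

lemma is_comp_append[simp]: "is_comp (xs @ ys) \<longleftrightarrow> is_comp xs \<and> is_comp ys"
  by (auto simp: is_comp_def)

lemma is_comp_Cons[simp]: "is_comp (x # ys) \<longleftrightarrow> 0 < x \<and> is_comp ys"
  by (auto simp: is_comp_def)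

lemma is_comp_Nil[simp]: "is_comp []"
  by (auto simp: is_comp_def)

lemma comp_sum_pos: "is_comp xs \<Longrightarrow> xs \<noteq> [] \<Longrightarrow> 0 < sum_list xs"
  by (cases xs) auto

lemma comp_len_le: "is_comp xs \<Longrightarrow> length xs \<le> sum_list xs"
  by (induction xs) auto

lemma finite_comps: "finite {\<beta>. is_comp \<beta> \<and> sum_list \<beta> = n \<and> P \<beta>}"
proof -
  have "{\<beta>. is_comp \<beta> \<and> sum_list \<beta> = n \<and> P \<beta>} \<subseteq> {xs. set xs \<subseteq> {..n} \<and> length xs \<le> n}"
    using comp_len_le member_le_sum_list by fastforce
  then show ?thesis using finite_lists_length_le[of "{..n}" n] finite_subset by blast
qed

lemma S_apply: "S \<alpha> \<delta> = (if is_comp \<delta> \<and> sum_list \<delta> = sum_list \<alpha> \<and>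
                      Iset (m_o \<alpha>) \<subseteq> Iset \<delta> \<and> Iset \<delta> \<subseteq> Iset \<alpha> then coef \<alpha> \<delta> else 0)"
proof -
  have f: "finite {\<beta>. is_comp \<beta> \<and> sum_list \<beta> = sum_list \<alpha> \<and>
                      Iset (m_o \<alpha>) \<subseteq> Iset \<beta> \<and> Iset \<beta> \<subseteq> Iset \<alpha>}" by (rule finite_comps)
  show ?thesis unfolding S_def sum_fun_app M_def
    using f by (simp add: if_distrib[of "\<lambda>x. _ * x"] cong: if_cong)
qed

lemma Iset_Nil[simp]: "Iset [] = {}" by (simp add: Iset_def)

lemma Iset_Cons: "Iset (a # L) = (if L = [] then {} else insert a ((+) a ` Iset L))"
proof (cases "L = []")
  case True then show ?thesis by (simp add: Iset_def)
next
  case False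
  have "Iset (a # L) = {sum_list (take k (a#L)) | k. 0 < k \<and> k < Suc (length L)}" by (simp add: Iset_def)
  also have "\<dots> = insert a ((+) a ` Iset L)"
  proof (rule set_eqI, rule iffI)
    fix x assume "x \<in> {sum_list (take k (a#L)) | k. 0 < k \<and> k < Suc (length L)}"
    then obtain k where k: "x = sum_list (take k (a#L))" "0 < k" "k < Suc (length L)" by blast
    then obtain k' where "k = Suc k'" by (cases k) auto
    then show "x \<in> insert a ((+) a ` Iset L)" using k
      by (cases k') (auto simp: Iset_def)
  next
    fix x assume "x \<in> insert a ((+) a ` Iset L)"
    then show "x \<in> {sum_list (take k (a#L)) | k. 0 < k \<and> k < Suc (length L)}"
    proof
      assume "x = a" then show ?thesis using False
        by (intro CollectI exI[of _ 1]) (auto)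
    next
      assume "x \<in> (+) a ` Iset L"
      then obtain k where "x = a + sum_list (take k L)" "0 < k" "k < length L" by (auto simp: Iset_def)
      then show ?thesis by (intro CollectI exI[of _ "Suc k"]) auto
    qed
  qed
  finally show ?thesis using False by simp
qed

lemma Iset_append: "Iset (xs @ ys) = Iset xs \<union> (+) (sum_list xs) ` Iset ys \<union>
   (if xs \<noteq> [] \<and> ys \<noteq> [] then {sum_list xs} else {})"
proof (induction xs)
  case Nil then show ?case by (simp add: image_def)
next
  case (Cons a xs)
  then show ?case by (auto simp: Iset_Cons image_image add.assoc image_Un)
qed

fun ote :: "nat list \<Rightarrow> nat set" where
  "ote [] = {}"
| "ote [a] = {}"
| "ote (a # b # r) = (if odd a \<and> even b then {a} else {}) \<union> (+) a ` ote (b # r)"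

lemma m_o_Nil_iff[simp]: "m_o L = [] \<longleftrightarrow> L = []"
  by (induction L rule: m_o.induct) (auto split: list.splits)

lemma Iset_Cons_add: "Iset ((a + h) # t) = (+) a ` Iset (h # t)"
  by (auto simp: Iset_Cons image_image add.assoc)

lemma Iset_m_o: "Iset (m_o L) = ote L"
proof (induction L rule: m_o.induct)
  case (3 a b rest)
  show ?case
  proof (cases "odd a \<and> even b")
    case True
    then show ?thesis using 3 by (simp add: Iset_Cons)
  next
    case False
    obtain h t where ht: "m_o (b # rest) = h # t" by (cases "m_o (b # rest)") auto
    have "m_o (a # b # rest) = (a + h) # t"
      by (simp only: m_o.simps if_not_P[OF False] ht list.case)
    moreover have "ote (a # b # rest) = (+) a ` ote (b # rest)" using False by auto
    moreover have ih: "Iset (h # t) = ote (b # rest)" using 3 False ht by metis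
    ultimately show ?thesis by (simp only: Iset_Cons_add)
  qed
qed (auto simp: Iset_def)

lemma ote_Cons: "ote (a # L) = (if L \<noteq> [] \<and> odd a \<and> even (hd L) then {a} else {}) \<union> (+) a ` ote L"
  by (cases L) auto

lemma ote_append: "ote (xs @ ys) = ote xs \<union> (+) (sum_list xs) ` ote ys \<union>
   (if xs \<noteq> [] \<and> ys \<noteq> [] \<and> odd (last xs) \<and> even (hd ys) then {sum_list xs} else {})"
proof (induction xs)
  case Nil then show ?case by (simp add: image_def)
next
  case (Cons a xs)
  show ?case
    apply (subst append_Cons, subst ote_Cons, subst ote_Cons)
    using Cons by (auto simp: image_image add.assoc image_Un)
qed

lemma sum_take_le: "sum_list (take k (xs::nat list)) \<le> sum_list xs"
  by (metis append_take_drop_id le_add1 sum_list_append)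

lemma sum_take_pos: "is_comp xs \<Longrightarrow> 0 < k \<Longrightarrow> xs \<noteq> [] \<Longrightarrow> 0 < sum_list (take k xs)"
  by (cases xs; cases k) auto

lemma sum_take_less: "is_comp xs \<Longrightarrow> k < length xs \<Longrightarrow> sum_list (take k xs) < sum_list xs"
proof -
  assume a: "is_comp xs" "k < length xs"
  have "sum_list xs = sum_list (take k xs) + sum_list (drop k xs)"
    by (metis append_take_drop_id sum_list_append)
  moreover have "0 < sum_list (drop k xs)" using a
    by (intro comp_sum_pos) (auto simp: is_comp_def dest: in_set_dropD)
  ultimately show ?thesis by simp
qed

lemma Iset_bounds: "is_comp xs \<Longrightarrow> y \<in> Iset xs \<Longrightarrow> 0 < y \<and> y < sum_list xs"
  by (auto simp: Iset_def intro!: sum_take_pos sum_take_less)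

lemma ote_bounds: "is_comp xs \<Longrightarrow> y \<in> ote xs \<Longrightarrow> 0 < y \<and> y < sum_list xs"
proof (induction xs arbitrary: y rule: ote.induct)
  case (3 a b r)
  then have b: "0 < b" by simp
  from 3(3) consider "y = a" | z where "z \<in> ote (b # r)" "y = a + z" by (auto split: if_splits)
  then show ?case
  proof cases
    case 1 then show ?thesis using 3 b by simp
  next
    case 2 then show ?thesis using 3(1)[of z] 3(2) by auto
  qed
qed auto

definition cond :: "nat list \<Rightarrow> nat list \<Rightarrow> bool" where
  "cond a d \<longleftrightarrow> is_comp d \<and> sum_list d = sum_list a \<and> ote a \<subseteq> Iset d \<and> Iset d \<subseteq> Iset a"

lemma cond_split:
  assumes a1: "is_comp a1" and a2: "is_comp a2" and s: "sum_list a1 = sum_list d1"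
  shows "cond (a1 @ a2) (d1 @ d2) \<longleftrightarrow> cond a1 d1 \<and> cond a2 d2"
proof
  assume c: "cond (a1 @ a2) (d1 @ d2)"
  then have d1: "is_comp d1" and d2: "is_comp d2" and s2: "sum_list d2 = sum_list a2"
    and o: "ote (a1 @ a2) \<subseteq> Iset (d1 @ d2)" and i: "Iset (d1 @ d2) \<subseteq> Iset (a1 @ a2)"
    using s by (auto simp: cond_def)
  note b = Iset_bounds ote_bounds
  have "Iset d1 \<subseteq> Iset a1"
  proof
    fix y assume y: "y \<in> Iset d1"
    then have "y \<in> Iset (a1 @ a2)" using i by (auto simp: Iset_append)
    moreover have "y < sum_list a1" using b(1)[OF d1 y] s by simp
    ultimately show "y \<in> Iset a1" using b(1)[OF a2] by (auto simp: Iset_append split: if_splits)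
  qed
  moreover have "Iset d2 \<subseteq> Iset a2"
  proof
    fix y assume y: "y \<in> Iset d2"
    then have "sum_list a1 + y \<in> Iset (a1 @ a2)" using i s by (auto simp: Iset_append)
    moreover have "0 < y" using b(1)[OF d2 y] by simp
    ultimately show "y \<in> Iset a2" using b(1)[OF a1] by (auto simp: Iset_append split: if_splits)
  qed
  moreover have "ote a1 \<subseteq> Iset d1"
  proof
    fix y assume y: "y \<in> ote a1"
    then have "y \<in> Iset (d1 @ d2)" using o by (auto simp: ote_append)
    moreover have "y < sum_list a1" using b(2)[OF a1 y] by simp
    ultimately show "y \<in> Iset d1" using b(1)[OF d2] s by (auto simp: Iset_append split: if_splits)
  qed
  moreover have "ote a2 \<subseteq> Iset d2"
  proof
    fix y assume y: "y \<in> ote a2"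
    then have "sum_list a1 + y \<in> Iset (d1 @ d2)" using o by (auto simp: ote_append)
    moreover have "0 < y" using b(2)[OF a2 y] by simp
    ultimately show "y \<in> Iset d2" using b(1)[OF d1] s by (auto simp: Iset_append split: if_splits)
  qed
  ultimately show "cond a1 d1 \<and> cond a2 d2" using d1 d2 s s2 by (auto simp: cond_def)
next
  assume c: "cond a1 d1 \<and> cond a2 d2"
  then have d1: "is_comp d1" and d2: "is_comp d2" and s2: "sum_list d2 = sum_list a2"
    and o1: "ote a1 \<subseteq> Iset d1" and i1: "Iset d1 \<subseteq> Iset a1"
    and o2: "ote a2 \<subseteq> Iset d2" and i2: "Iset d2 \<subseteq> Iset a2"
    using s by (auto simp: cond_def)
  have ne: "a1 \<noteq> [] \<Longrightarrow> a2 \<noteq> [] \<Longrightarrow> d1 \<noteq> [] \<and> d2 \<noteq> []"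
    using comp_sum_pos[OF a1] comp_sum_pos[OF a2] s s2 by (metis less_irrefl sum_list.Nil)
  have ne2: "d1 \<noteq> [] \<Longrightarrow> d2 \<noteq> [] \<Longrightarrow> a1 \<noteq> [] \<and> a2 \<noteq> []"
    using comp_sum_pos[OF d1] comp_sum_pos[OF d2] s s2 by (metis less_irrefl sum_list.Nil)
  have "ote (a1 @ a2) \<subseteq> Iset (d1 @ d2)"
    unfolding ote_append Iset_append using o1 o2 ne s by auto
  moreover have "Iset (d1 @ d2) \<subseteq> Iset (a1 @ a2)"
    unfolding Iset_append using i1 i2 ne2 s by auto
  ultimately show "cond (a1 @ a2) (d1 @ d2)" using d1 d2 s s2 by (auto simp: cond_def)
qed

definition cnt :: "(nat \<Rightarrow> bool) \<Rightarrow> nat list \<Rightarrow> nat list \<Rightarrow> nat \<Rightarrow> nat" where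
  "cnt P a d i = card {j. j < length a \<and> P (a ! j) \<and>
      sum_list (take i d) < sum_list (take (Suc j) a) \<and>
      sum_list (take (Suc j) a) \<le> sum_list (take (Suc i) d)}"

lemma O_cnt_eq: "O_cnt a d i = cnt odd a d i" by (simp add: O_cnt_def cnt_def)
lemma E_cnt_eq: "E_cnt a d i = cnt even a d i" by (simp add: E_cnt_def cnt_def)

lemma cnt1:
  assumes a2: "is_comp a2" and s: "sum_list a1 = sum_list d1" and i: "i < length d1"
  shows "cnt P (a1 @ a2) (d1 @ d2) i = cnt P a1 d1 i"
proof -
  have ti: "take i (d1 @ d2) = take i d1" "take (Suc i) (d1 @ d2) = take (Suc i) d1" using i by auto
  have "{j. j < length (a1 @ a2) \<and> P ((a1 @ a2) ! j) \<and>
      sum_list (take i (d1 @ d2)) < sum_list (take (Suc j) (a1 @ a2)) \<and>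
      sum_list (take (Suc j) (a1 @ a2)) \<le> sum_list (take (Suc i) (d1 @ d2))} =
    {j. j < length a1 \<and> P (a1 ! j) \<and>
      sum_list (take i d1) < sum_list (take (Suc j) a1) \<and>
      sum_list (take (Suc j) a1) \<le> sum_list (take (Suc i) d1)}" (is "?L = ?R")
  proof (rule set_eqI, rule iffI)
    fix j assume j: "j \<in> ?L"
    have "j < length a1"
    proof (rule ccontr)
      assume "\<not> j < length a1"
      then have "sum_list (take (Suc j) (a1 @ a2)) = sum_list a1 + sum_list (take (Suc j - length a1) a2)"
        by simp
      moreover have "0 < sum_list (take (Suc j - length a1) a2)"
        using j \<open>\<not> j < length a1\<close> by (intro sum_take_pos a2) auto
      moreover have "sum_list (take (Suc i) d1) \<le> sum_list d1" by (rule sum_take_le)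
      moreover have "sum_list (take (Suc j) (a1 @ a2)) \<le> sum_list (take (Suc i) d1)"
        using j ti(2) by (simp only: mem_Collect_eq)
      ultimately show False using s by linarith
    qed
    then show "j \<in> ?R" using j ti i by (simp add: nth_append)
  next
    fix j assume j: "j \<in> ?R"
    then show "j \<in> ?L" using ti i by (simp add: nth_append)
  qed
  then show ?thesis by (simp add: cnt_def)
qed

lemma cnt2:
  assumes a1: "is_comp a1" and s: "sum_list a1 = sum_list d1" and i: "i < length d2"
  shows "cnt P (a1 @ a2) (d1 @ d2) (length d1 + i) = cnt P a2 d2 i"
proof -
  have ti: "sum_list (take (length d1 + i) (d1 @ d2)) = sum_list d1 + sum_list (take i d2)"
     "sum_list (take (Suc (length d1 + i)) (d1 @ d2)) = sum_list d1 + sum_list (take (Suc i) d2)"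
    by (auto simp: Suc_diff_le)
  let ?R = "{j. j < length a2 \<and> P (a2 ! j) \<and>
      sum_list (take i d2) < sum_list (take (Suc j) a2) \<and>
      sum_list (take (Suc j) a2) \<le> sum_list (take (Suc i) d2)}"
  have "{j. j < length (a1 @ a2) \<and> P ((a1 @ a2) ! j) \<and>
      sum_list (take (length d1 + i) (d1 @ d2)) < sum_list (take (Suc j) (a1 @ a2)) \<and>
      sum_list (take (Suc j) (a1 @ a2)) \<le> sum_list (take (Suc (length d1 + i)) (d1 @ d2))} =
    (+) (length a1) ` ?R" (is "?L = _")
  proof (rule set_eqI, rule iffI)
    fix j assume j: "j \<in> ?L"
    have "\<not> j < length a1"
    proof
      assume "j < length a1"
      then have "sum_list (take (Suc j) (a1 @ a2)) = sum_list (take (Suc j) a1)"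
        by simp
      moreover have "sum_list (take (Suc j) a1) \<le> sum_list a1" by (rule sum_take_le)
      moreover have "sum_list d1 + sum_list (take i d2) < sum_list (take (Suc j) (a1 @ a2))"
        using j ti(1) by (simp only: mem_Collect_eq)
      ultimately show False using s by linarith
    qed
    then obtain j' where j': "j = length a1 + j'" using le_Suc_ex by (metis not_less)
    have "Suc j - length a1 = Suc j'" using j' by simp
    then have "j' \<in> ?R" using j j' ti s by (simp add: nth_append)
    then show "j \<in> (+) (length a1) ` ?R" using j' by blast
  next
    fix j assume "j \<in> (+) (length a1) ` ?R"
    then obtain j' where j': "j = length a1 + j'" "j' \<in> ?R" by blast
    have "Suc j - length a1 = Suc j'" using j' by simp
    then show "j \<in> ?L" using j' ti s by (simp add: nth_append)
  qed
  then show ?thesis by (simp add: cnt_def card_image)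
qed

lemma prod_lessThan_add: "(\<Prod>i<m + n. f i) = (\<Prod>i<m. f i) * (\<Prod>i<n. f (m + i))"
  for f :: "nat \<Rightarrow> rat"
  by (induction n) (auto simp: mult.assoc)

lemma coef_split:
  assumes a1: "is_comp a1" and a2: "is_comp a2" and s: "sum_list a1 = sum_list d1"
  shows "coef (a1 @ a2) (d1 @ d2) = coef a1 d1 * coef a2 d2"
proof -
  have "coef (a1 @ a2) (d1 @ d2) =
    (\<Prod>i<length d1. 1 / (fact (O_cnt (a1 @ a2) (d1 @ d2) i) * fact (E_cnt (a1 @ a2) (d1 @ d2) i))) *
    (\<Prod>i<length d2. 1 / (fact (O_cnt (a1 @ a2) (d1 @ d2) (length d1 + i)) *
       fact (E_cnt (a1 @ a2) (d1 @ d2) (length d1 + i))))"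
    unfolding coef_def length_append prod_lessThan_add ..
  also have "\<dots> = coef a1 d1 * coef a2 d2"
    unfolding coef_def O_cnt_eq E_cnt_eq
    by (simp add: cnt1[OF a2 s] cnt2[OF a1 s])
  finally show ?thesis .
qed

lemma S_apply2: "S a d = (if cond a d then coef a d else 0)"
  by (simp add: S_apply cond_def Iset_m_o)

lemma sum_take_strict:
  assumes "is_comp xs" "k < k'" "k' \<le> length xs"
  shows "sum_list (take k xs) < sum_list (take k' xs)"
proof -
  have "take k' xs = take k xs @ take (k' - k) (drop k xs)"
    using take_add[of k "k' - k" xs] assms(2) by simp
  moreover have "0 < sum_list (take (k' - k) (drop k xs))"
    using assms by (intro sum_take_pos) (auto simp: is_comp_def dest: in_set_dropD)
  ultimately show ?thesis by simp
qed

lemma splits_eq: "{(b, c). b @ c = xs} = (\<lambda>k. (take k xs, drop k xs)) ` {..length xs}"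
proof (rule set_eqI, rule iffI)
  fix p assume "p \<in> {(b, c). b @ c = xs}"
  then obtain b c where "p = (b, c)" "b @ c = xs" by blast
  then show "p \<in> (\<lambda>k. (take k xs, drop k xs)) ` {..length xs}"
    by (intro image_eqI[of _ _ "length b"]) auto
qed auto

lemma pointwise:
  assumes a: "is_comp \<alpha>"
  shows "S \<alpha> (x @ y) = (\<Sum>p\<in>{(b, c). b @ c = \<alpha>}. S (fst p) x * S (snd p) y)"
proof (cases "\<exists>k\<le>length \<alpha>. sum_list (take k \<alpha>) = sum_list x")
  case True
  then obtain k where k: "k \<le> length \<alpha>" "sum_list (take k \<alpha>) = sum_list x" by blast
  define a1 where "a1 = take k \<alpha>"
  define a2 where "a2 = drop k \<alpha>"
  have a12: "\<alpha> = a1 @ a2" by (simp add: a1_def a2_def)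
  have c1: "is_comp a1" and c2: "is_comp a2" using a a12 by auto
  have s: "sum_list a1 = sum_list x" using k by (simp add: a1_def)
  have fin: "finite {(b, c). b @ c = \<alpha>}" by (simp add: splits_eq)
  have mem: "(a1, a2) \<in> {(b, c). b @ c = \<alpha>}" using a12 by simp
  have zero: "S (fst p) x * S (snd p) y = 0" if p: "p \<in> {(b, c). b @ c = \<alpha>} - {(a1, a2)}" for p
  proof -
    obtain k' where k': "k' \<le> length \<alpha>" "p = (take k' \<alpha>, drop k' \<alpha>)"
      using p unfolding splits_eq by auto
    have "k' \<noteq> k" using p k' by (auto simp: a1_def a2_def)
    then have "sum_list (take k' \<alpha>) \<noteq> sum_list (take k \<alpha>)"
      using sum_take_strict[OF a _ k'(1)] sum_take_strict[OF a _ k(1)]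
      by (metis less_irrefl nat_neq_iff)
    then have "\<not> cond (fst p) x" using k k' by (auto simp: cond_def)
    then show ?thesis by (simp add: S_apply2)
  qed
  have "(\<Sum>p\<in>{(b, c). b @ c = \<alpha>}. S (fst p) x * S (snd p) y) = S a1 x * S a2 y"
    by (subst sum.remove[OF fin mem]) (simp add: sum.neutral zero)
  also have "\<dots> = S \<alpha> (x @ y)"
    unfolding S_apply2 a12 cond_split[OF c1 c2 s] coef_split[OF c1 c2 s] by simp
  finally show ?thesis by simp
next
  case False
  have zero: "S (fst p) x * S (snd p) y = 0" if p: "p \<in> {(b, c). b @ c = \<alpha>}" for p
  proof -
    obtain k' where k': "k' \<le> length \<alpha>" "p = (take k' \<alpha>, drop k' \<alpha>)"
      using p unfolding splits_eq by auto
    then have "\<not> cond (fst p) x" using False by (auto simp: cond_def)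
    then show ?thesis by (simp add: S_apply2)
  qed
  have "\<not> cond \<alpha> (x @ y)"
  proof
    assume c: "cond \<alpha> (x @ y)"
    then have s: "sum_list x + sum_list y = sum_list \<alpha>" and i: "Iset (x @ y) \<subseteq> Iset \<alpha>"
      by (auto simp: cond_def)
    show False
    proof (cases "x \<noteq> [] \<and> y \<noteq> []")
      case True
      then have "sum_list x \<in> Iset \<alpha>" using i by (auto simp: Iset_append)
      then obtain k where "sum_list x = sum_list (take k \<alpha>)" "k < length \<alpha>" by (auto simp: Iset_def)
      then show False using False by (metis less_imp_le)
    next
      case ne: False
      then have "x = [] \<or> y = []" by blast
      then show False
      proof
        assume "x = []" then show False using False by (metis le0 sum_list.Nil take_0)
      next
        assume "y = []" then show False using False s by (metis add_0_right order_refl sum_list.Nil take_all)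
      qed
    qed
  qed
  then have "S \<alpha> (x @ y) = 0" by (simp add: S_apply2)
  moreover have "(\<Sum>p\<in>{(b, c). b @ c = \<alpha>}. S (fst p) x * S (snd p) y) = 0"
    using zero by (intro sum.neutral) blast
  ultimately show ?thesis by simp
qed

theorem mainTheorem3:
  fixes \<alpha> :: "nat list"
  assumes "is_comp \<alpha>"
  shows "Delta (S \<alpha>) = (\<Sum>(\<beta>, \<gamma>)\<in>{(\<beta>, \<gamma>). \<beta> @ \<gamma> = \<alpha>}. tensor (S \<beta>) (S \<gamma>))"
proof (rule ext, clarify)
  fix x y
  show "Delta (S \<alpha>) (x, y) = (\<Sum>(\<beta>, \<gamma>)\<in>{(\<beta>, \<gamma>). \<beta> @ \<gamma> = \<alpha>}. tensor (S \<beta>) (S \<gamma>)) (x, y)"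
    unfolding sum_fun_app Delta_def pointwise[OF assms]
    by (simp add: tensor_def split_def)
qed

end
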